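(* (i) $\mathfrak{L}$ is a system of representatives of $\mathfrak{H}/\!\sim$. (ii) If $\underline h,\underline h'\in\mathfrak{H}$ and $\underline h\sim\underline h'$, then $J^{\underline h}=J^{\underline h'}$ and $\mathfrak{S}^{\underline h}=\mathfrak{S}^{\underline h'}$. (iii) If $\underline\ell,\underline\ell'\in\mathfrak{L}$ and $\underline\ell\ne\underline\ell'$, then $\mathfrak{S}^{\underline\ell}\cap\mathfrak{S}^{\underline\ell'}=\emptyset$. (iv) For each $\underline\ell\in\mathfrak{L}$, the map $m\in\mathfrak{S}^{\underline\ell}\mapsto m^2\bmod 4P$ is constant.
   Context: $r\ge3$; $p_1,\dots,p_r$ positive pairwise coprime, $p_2,\dots,p_r$ odd; $P=p_1\cdots p_r$, $\hat p_j=P/p_j$; $E=\{\pm1\}^r$. $\mathfrak{H}$: $\underline h\in\mathbb{Z}^r$ with $0\le h_j\le p_j$ and $h_j/p_j\notin\mathbb{Z}$ for at least three $j$; $\mathfrak{L}$: those with $h_j$ even for $j\ge2$. $J^{\underline h}=\{j:p_j\mid h_j\}$; $\mathcal{N}^{\underline h}(\underline\varepsilon)=P+\sum_j\varepsilon_jh_j\hat p_j$; $\mathfrak{S}^{\underline h}=\mathcal{N}^{\underline h}(E)+2P\mathbb{Z}$. Equivalence: $\underline h\sim\underline h'$ iff there is $J\subset\{1,\dots,r\}$ with $|J|$ even such that $h_j=p_j-h'_j$ for $j\in J$ and $h_j=h'_j$ for $j\notin J$. *)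

theory Defs
  imports "HOL-Library.FuncSet"
begin

text \<open>Tuples indexed by {1..r} are extensional functions nat => int.\<close>

definition bigP :: "nat \<Rightarrow> (nat \<Rightarrow> int) \<Rightarrow> int" where
  "bigP r p = (\<Prod>j\<in>{1..r}. p j)"

definition phat :: "nat \<Rightarrow> (nat \<Rightarrow> int) \<Rightarrow> nat \<Rightarrow> int" where
  "phat r p j = bigP r p div p j"

definition signsE :: "nat \<Rightarrow> (nat \<Rightarrow> int) set" where
  "signsE r = ({1..r} \<rightarrow>\<^sub>E {-1, 1})"

definition frakH :: "nat \<Rightarrow> (nat \<Rightarrow> int) \<Rightarrow> (nat \<Rightarrow> int) set" where
  "frakH r p = {h. h \<in> extensional {1..r} \<and> (\<forall>j\<in>{1..r}. 0 \<le> h j \<and> h j \<le> p j)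
                 \<and> card {j\<in>{1..r}. \<not> p j dvd h j} \<ge> 3}"

definition frakL :: "nat \<Rightarrow> (nat \<Rightarrow> int) \<Rightarrow> (nat \<Rightarrow> int) set" where
  "frakL r p = {h\<in>frakH r p. \<forall>j\<in>{2..r}. even (h j)}"

definition Jset :: "nat \<Rightarrow> (nat \<Rightarrow> int) \<Rightarrow> (nat \<Rightarrow> int) \<Rightarrow> nat set" where
  "Jset r p h = {j\<in>{1..r}. p j dvd h j}"

definition calN :: "nat \<Rightarrow> (nat \<Rightarrow> int) \<Rightarrow> (nat \<Rightarrow> int) \<Rightarrow> (nat \<Rightarrow> int) \<Rightarrow> int" where
  "calN r p h \<epsilon> = bigP r p + (\<Sum>j\<in>{1..r}. \<epsilon> j * h j * phat r p j)"

definition frakS :: "nat \<Rightarrow> (nat \<Rightarrow> int) \<Rightarrow> (nat \<Rightarrow> int) \<Rightarrow> int set" where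
  "frakS r p h = {m. \<exists>\<epsilon>\<in>signsE r. \<exists>k::int. m = calN r p h \<epsilon> + 2 * bigP r p * k}"

definition hsim :: "nat \<Rightarrow> (nat \<Rightarrow> int) \<Rightarrow> (nat \<Rightarrow> int) \<Rightarrow> (nat \<Rightarrow> int) \<Rightarrow> bool" where
  "hsim r p h h' \<longleftrightarrow> (\<exists>J. J \<subseteq> {1..r} \<and> even (card J)
      \<and> (\<forall>j\<in>J. h j = p j - h' j) \<and> (\<forall>j\<in>{1..r} - J. h j = h' j))"

end

theory Submission
  imports Defs
begin

lemma arithA:
  fixes q a b e e' :: int
  assumes "q > 0" "odd q" "even a" "even b" "0 \<le> a" "a \<le> q" "0 \<le> b" "b \<le> q"
    "e \<in> {-1,1}" "e' \<in> {-1,1}" "q dvd e * a - e' * b"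
  shows "a = b"
proof -
  obtain k where k: "e * a - e' * b = q * k" using assms(11) by (auto elim: dvdE)
  have "k \<le> 2"
  proof (rule ccontr)
    assume "\<not> k \<le> 2" then have "q * k \<ge> q * 3" using assms(1) by (intro mult_left_mono) auto
    then have "e * a - e' * b \<ge> q * 3" using k by (simp add: mult.assoc)
    then show False using assms by auto
  qed
  moreover have "k \<ge> -2"
  proof (rule ccontr)
    assume "\<not> k \<ge> -2" then have "q * k \<le> q * (-3)" using assms(1) by (intro mult_left_mono) auto
    then have "e * a - e' * b \<le> q * (-3)" using k by (simp add: mult.assoc)
    then show False using assms by auto
  qed
  moreover have "even (q * k)" using k assms(3,4) by (metis dvd_diff dvd_mult)
  then have "even k" using assms(2) by simp
  ultimately have "k \<in> {-2,0,2}" by (auto elim!: evenE)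
  moreover have "a \<noteq> q" using assms(2,3) by auto
  moreover have "b \<noteq> q" using assms(2,4) by auto
  ultimately show ?thesis using k assms(5-10) by auto
qed

lemma arithB:
  fixes q a b e e' :: int
  assumes "q > 0" "0 \<le> a" "a \<le> q" "0 \<le> b" "b \<le> q"
    "e \<in> {-1,1}" "e' \<in> {-1,1}" "2 * q dvd e * a - e' * b"
  shows "a = b"
proof -
  obtain k where k: "e * a - e' * b = 2 * q * k" using assms(8) by (auto elim: dvdE)
  have "k \<le> 1"
  proof (rule ccontr)
    assume "\<not> k \<le> 1" then have "q * k \<ge> q * 2" using assms(1) by (intro mult_left_mono) auto
    then have "e * a - e' * b \<ge> 2 * q * 2" using k by linarith
    then show False using assms by auto
  qed
  moreover have "k \<ge> -1"
  proof (rule ccontr)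
    assume "\<not> k \<ge> -1" then have "q * k \<le> q * (-2)" using assms(1) by (intro mult_left_mono) auto
    then have "e * a - e' * b \<le> 2 * q * (-2)" using k by linarith
    then show False using assms by auto
  qed
  ultimately have "k \<in> {-1,0,1}" by auto
  then show ?thesis using k assms by auto
qed

lemma sum_dvd_single:
  fixes f :: "nat \<Rightarrow> int"
  assumes "finite A" "j \<in> A" "d dvd sum f A" "\<And>i. i \<in> A \<Longrightarrow> i \<noteq> j \<Longrightarrow> d dvd f i"
  shows "d dvd f j"
proof -
  have "sum f A = f j + sum f (A - {j})" using assms(1,2) by (simp add: sum.remove)
  moreover have "d dvd sum f (A - {j})" using assms(4) by (intro dvd_sum) auto
  ultimately show ?thesis using assms(3) by (metis add_diff_cancel_right' dvd_diff)
qed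

lemma odd_prodI: "finite A \<Longrightarrow> (\<And>k. k \<in> A \<Longrightarrow> odd (f k :: int)) \<Longrightarrow> odd (prod f A)"
  by (induct rule: finite_induct) auto

locale lemB =
  fixes r :: nat and p :: "nat \<Rightarrow> int"
  assumes r3: "r \<ge> 3"
    and ppos: "\<forall>j\<in>{1..r}. p j > 0"
    and pcop: "\<forall>i\<in>{1..r}. \<forall>j\<in>{1..r}. i \<noteq> j \<longrightarrow> coprime (p i) (p j)"
    and podd: "\<forall>j\<in>{2..r}. odd (p j)"
begin

abbreviation "P \<equiv> bigP r p"

lemma phat_eq: "j \<in> {1..r} \<Longrightarrow> phat r p j = (\<Prod>k\<in>{1..r}-{j}. p k)"
proof -
  assume j: "j \<in> {1..r}"
  have "P = p j * (\<Prod>k\<in>{1..r}-{j}. p k)" unfolding bigP_def using j by (simp add: prod.remove)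
  moreover have "p j > 0" using ppos j by blast
  ultimately show ?thesis unfolding phat_def by simp
qed

lemma phat_mult: "j \<in> {1..r} \<Longrightarrow> p j * phat r p j = P"
proof -
  assume j: "j \<in> {1..r}"
  have "P = p j * (\<Prod>k\<in>{1..r}-{j}. p k)" unfolding bigP_def
    by (rule prod.remove) (use j in auto)
  then show ?thesis using phat_eq[OF j] by simp
qed

lemma p_dvd_phat: "i \<in> {1..r} \<Longrightarrow> j \<in> {1..r} \<Longrightarrow> i \<noteq> j \<Longrightarrow> p i dvd phat r p j"
  by (simp add: phat_eq dvd_prodI)

lemma cop_phat: "j \<in> {1..r} \<Longrightarrow> coprime (p j) (phat r p j)"
proof -
  assume j: "j \<in> {1..r}"
  have "coprime (p j) (\<Prod>k\<in>{1..r}-{j}. p k)"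
  proof (rule prod_coprime_right)
    fix k assume "k \<in> {1..r}-{j}"
    then have "k \<in> {1..r}" "j \<noteq> k" by auto
    then show "coprime (p j) (p k)" using pcop[rule_format, OF j] by simp
  qed
  then show ?thesis using j by (simp add: phat_eq)
qed

lemma p_dvd_P: "j \<in> {1..r} \<Longrightarrow> p j dvd P"
  using phat_mult by (metis dvd_triv_left)

lemma P_dvd_phat2: "i \<in> {1..r} \<Longrightarrow> j \<in> {1..r} \<Longrightarrow> i \<noteq> j \<Longrightarrow> P dvd phat r p i * phat r p j"
proof -
  assume ij: "i \<in> {1..r}" "j \<in> {1..r}" "i \<noteq> j"
  have "phat r p i * p i dvd phat r p i * phat r p j"
    by (rule mult_dvd_mono[OF dvd_refl p_dvd_phat[OF ij]])
  then show ?thesis using phat_mult[OF ij(1)] by (simp add: mult.commute)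
qed

lemma phat1_odd: "odd (phat r p 1)"
proof -
  have "odd (\<Prod>k\<in>{1..r}-{1}. p k)" using podd
    by (intro odd_prodI) auto
  then show ?thesis using r3 by (simp add: phat_eq)
qed

lemma hsim_sym: "hsim r p h h' \<Longrightarrow> hsim r p h' h"
proof -
  assume "hsim r p h h'"
  then obtain J where J: "J \<subseteq> {1..r}" "even (card J)" "\<forall>j\<in>J. h j = p j - h' j" "\<forall>j\<in>{1..r} - J. h j = h' j"
    unfolding hsim_def by blast
  then have "\<forall>j\<in>J. h' j = p j - h j" "\<forall>j\<in>{1..r} - J. h' j = h j" by auto
  then show ?thesis unfolding hsim_def using J(1,2) by blast
qed

lemma hsim_J: "hsim r p h h' \<Longrightarrow> Jset r p h = Jset r p h'"
  unfolding hsim_def Jset_def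
proof -
  assume "\<exists>J. J \<subseteq> {1..r} \<and> even (card J) \<and> (\<forall>j\<in>J. h j = p j - h' j) \<and> (\<forall>j\<in>{1..r} - J. h j = h' j)"
  then obtain J where J: "J \<subseteq> {1..r}" "\<forall>j\<in>J. h j = p j - h' j" "\<forall>j\<in>{1..r} - J. h j = h' j" by blast
  have "p j dvd h j \<longleftrightarrow> p j dvd h' j" if "j \<in> {1..r}" for j
  proof (cases "j \<in> J")
    case True
    then show ?thesis using J(2) by (simp add: dvd_diff_right_iff)
  next
    case False
    then show ?thesis using J(3) that by simp
  qed
  then show "{j \<in> {1..r}. p j dvd h j} = {j \<in> {1..r}. p j dvd h' j}" by blast
qed

lemma even_sum_signs:
  assumes "finite J" "\<forall>j\<in>J. e j \<in> {-1, 1::int}" "even (card J)"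
  shows "even (\<Sum>j\<in>J. e j)"
proof -
  have "(\<Sum>j\<in>J. e j) = (\<Sum>j\<in>J. e j - 1) + of_nat (card J)"
    by (simp add: sum_subtractf)
  moreover have "even (\<Sum>j\<in>J. e j - 1)" using assms(2) by (intro dvd_sum) auto
  ultimately show ?thesis using assms(3) by simp
qed

lemma hsim_S_sub:
  assumes "hsim r p h h'"
  shows "frakS r p h \<subseteq> frakS r p h'"
proof
  fix m assume "m \<in> frakS r p h"
  then obtain \<epsilon> k where e: "\<epsilon> \<in> signsE r" and m: "m = calN r p h \<epsilon> + 2 * P * k"
    unfolding frakS_def by blast
  obtain J where J: "J \<subseteq> {1..r}" "even (card J)" "\<forall>j\<in>J. h j = p j - h' j" "\<forall>j\<in>{1..r} - J. h j = h' j"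
    using assms unfolding hsim_def by blast
  define e' where "e' = (\<lambda>j. if j \<in> J then - \<epsilon> j else \<epsilon> j)"
  have eE: "\<forall>j\<in>{1..r}. \<epsilon> j \<in> {-1,1}" "\<epsilon> \<in> extensional {1..r}"
    using e unfolding signsE_def by (auto simp: PiE_iff)
  have e'E: "e' \<in> signsE r"
    unfolding signsE_def PiE_iff e'_def using eE J(1) by (auto simp: extensional_def)
  have tm: "\<epsilon> j * h j * phat r p j = e' j * h' j * phat r p j + (if j \<in> J then \<epsilon> j * P else 0)"
    if j: "j \<in> {1..r}" for j
  proof (cases "j \<in> J")
    case True
    have "\<epsilon> j * (p j - h' j) * phat r p j = \<epsilon> j * (p j * phat r p j) - \<epsilon> j * h' j * phat r p j"
      by (simp add: algebra_simps)
    then show ?thesis using True J(3) phat_mult[OF j] by (simp add: e'_def)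
  next
    case False
    then show ?thesis using J(4) j by (simp add: e'_def)
  qed
  have "(\<Sum>j\<in>{1..r}. \<epsilon> j * h j * phat r p j)
      = (\<Sum>j\<in>{1..r}. e' j * h' j * phat r p j) + (\<Sum>j\<in>{1..r}. (if j \<in> J then \<epsilon> j * P else 0))"
    using tm by (simp add: sum.distrib[symmetric])
  also have "(\<Sum>j\<in>{1..r}. (if j \<in> J then \<epsilon> j * P else 0)) = (\<Sum>j\<in>{1..r} \<inter> J. \<epsilon> j * P)"
    by (simp add: sum.inter_restrict)
  also have "{1..r} \<inter> J = J" using J(1) by blast
  finally have eq0: "(\<Sum>j\<in>{1..r}. \<epsilon> j * h j * phat r p j)
      = (\<Sum>j\<in>{1..r}. e' j * h' j * phat r p j) + (\<Sum>j\<in>J. \<epsilon> j * P)" .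
  have "(\<Sum>j\<in>J. \<epsilon> j * P) = P * (\<Sum>j\<in>J. \<epsilon> j)" by (simp add: sum_distrib_left mult.commute)
  then have eq: "calN r p h \<epsilon> = calN r p h' e' + P * (\<Sum>j\<in>J. \<epsilon> j)"
    unfolding calN_def using eq0 by simp
  have "even (\<Sum>j\<in>J. \<epsilon> j)" using even_sum_signs[of J \<epsilon>] J eE(1) finite_subset[OF J(1)] by auto
  then obtain s where s: "(\<Sum>j\<in>J. \<epsilon> j) = 2 * s" by (auto elim: evenE)
  have "m = calN r p h' e' + 2 * P * (s + k)" using m eq s by (simp add: algebra_simps)
  then show "m \<in> frakS r p h'" unfolding frakS_def using e'E by blast
qed

lemma sq_const:
  assumes e: "\<epsilon> \<in> signsE r"
  shows "(calN r p h \<epsilon>)\<^sup>2 mod (4 * P) = (calN r p h (\<lambda>j\<in>{1..r}. 1))\<^sup>2 mod (4 * P)"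
proof -
  define F where "F = {j\<in>{1..r}. \<epsilon> j = -1}"
  define G where "G = {1..r} - F"
  define A where "A = (\<Sum>j\<in>F. h j * phat r p j)"
  define R where "R = (\<Sum>j\<in>G. h j * phat r p j)"
  have eE: "\<forall>j\<in>{1..r}. \<epsilon> j \<in> {-1,1}"
    using e unfolding signsE_def by (auto simp: PiE_iff)
  have FG: "F \<subseteq> {1..r}" "finite {1..r}" unfolding F_def by auto
  have split: "(\<Sum>j\<in>{1..r}. f j) = (\<Sum>j\<in>G. f j) + (\<Sum>j\<in>F. f j)" for f :: "nat \<Rightarrow> int"
    unfolding G_def using sum.subset_diff[OF FG] by simp
  have "(\<Sum>j\<in>F. \<epsilon> j * h j * phat r p j) = (\<Sum>j\<in>F. - (h j * phat r p j))"
    by (rule sum.cong) (auto simp: F_def)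
  moreover have "(\<Sum>j\<in>G. \<epsilon> j * h j * phat r p j) = (\<Sum>j\<in>G. h j * phat r p j)"
    by (rule sum.cong) (use eE in \<open>auto simp: G_def F_def\<close>)
  ultimately have N1: "calN r p h \<epsilon> = P + R - A"
    unfolding calN_def A_def R_def using split[of "\<lambda>j. \<epsilon> j * h j * phat r p j"] by (simp add: sum_negf)
  have "(\<Sum>j\<in>{1..r}. (\<lambda>j\<in>{1..r}. 1) j * h j * phat r p j) = (\<Sum>j\<in>{1..r}. h j * phat r p j)"
    by (rule sum.cong) auto
  then have N2: "calN r p h (\<lambda>j\<in>{1..r}. 1) = P + R + A"
    unfolding calN_def A_def R_def using split[of "\<lambda>j. h j * phat r p j"] by simp
  have "P dvd A * R"
    unfolding A_def R_def sum_product
  proof (intro dvd_sum)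
    fix i j assume "i \<in> F" "j \<in> G"
    then have "i \<in> {1..r}" "j \<in> {1..r}" "i \<noteq> j" unfolding G_def F_def by auto
    then have "P dvd phat r p i * phat r p j" by (rule P_dvd_phat2)
    then show "P dvd h i * phat r p i * (h j * phat r p j)"
      by (metis dvd_mult mult.assoc mult.left_commute)
  qed
  then have "4 * P dvd 4 * (A * P + A * R)" by simp
  moreover have "(P + R - A)\<^sup>2 - (P + R + A)\<^sup>2 = - (4 * (A * P + A * R))"
    by (simp add: power2_eq_square algebra_simps)
  ultimately show ?thesis unfolding N1 N2 by (simp only: mod_eq_dvd_iff dvd_minus_iff)
qed

lemma sq_shift: "(x + 2 * P * k)\<^sup>2 mod (4 * P) = x\<^sup>2 mod (4 * P)"
proof -
  have "(x + 2 * P * k)\<^sup>2 - x\<^sup>2 = 4 * P * (x * k + P * k * k)"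
    by (simp add: power2_eq_square algebra_simps)
  then show ?thesis by (simp add: mod_eq_dvd_iff)
qed

lemma L_facts:
  assumes "l \<in> frakL r p"
  shows "l \<in> extensional {1..r}" "\<forall>j\<in>{1..r}. 0 \<le> l j \<and> l j \<le> p j" "\<forall>j\<in>{2..r}. even (l j)"
  using assms unfolding frakL_def frakH_def by auto

lemma L_disj:
  assumes l: "l \<in> frakL r p" and l': "l' \<in> frakL r p"
    and m: "m \<in> frakS r p l" "m \<in> frakS r p l'"
  shows "l = l'"
proof -
  obtain \<epsilon> k where e: "\<epsilon> \<in> signsE r" and mk: "m = calN r p l \<epsilon> + 2 * P * k"
    using m(1) unfolding frakS_def by blast
  obtain \<epsilon>' k' where e': "\<epsilon>' \<in> signsE r" and mk': "m = calN r p l' \<epsilon>' + 2 * P * k'"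
    using m(2) unfolding frakS_def by blast
  have eE: "\<forall>j\<in>{1..r}. \<epsilon> j \<in> {-1,1}" "\<forall>j\<in>{1..r}. \<epsilon>' j \<in> {-1,1}"
    using e e' unfolding signsE_def by (auto simp: PiE_iff)
  note lf = L_facts[OF l] and lf' = L_facts[OF l']
  define c where "c = (\<lambda>j. (\<epsilon> j * l j - \<epsilon>' j * l' j) * phat r p j)"
  have "(\<Sum>j\<in>{1..r}. c j) = (\<Sum>j\<in>{1..r}. \<epsilon> j * l j * phat r p j - \<epsilon>' j * l' j * phat r p j)"
    unfolding c_def by (rule sum.cong) (simp_all add: algebra_simps)
  also have "\<dots> = calN r p l \<epsilon> - calN r p l' \<epsilon>'"
    unfolding calN_def by (simp add: sum_subtractf)
  also have "\<dots> = 2 * P * (k' - k)" using mk mk' by (simp add: algebra_simps)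
  finally have sc: "2 * P dvd (\<Sum>j\<in>{1..r}. c j)" by simp
  have high: "l j = l' j" if j: "j \<in> {2..r}" for j
  proof -
    have j1: "j \<in> {1..r}" using j by auto
    have "p j dvd 2 * P" using p_dvd_P[OF j1] by simp
    then have "p j dvd (\<Sum>j\<in>{1..r}. c j)" using sc dvd_trans by blast
    then have "p j dvd c j"
    proof (rule sum_dvd_single[rotated 2])
      fix i assume "i \<in> {1..r}" "i \<noteq> j"
      then have "p j dvd phat r p i" using p_dvd_phat j1 by auto
      then show "p j dvd c i" unfolding c_def by simp
    qed (use j1 in auto)
    then have "p j dvd \<epsilon> j * l j - \<epsilon>' j * l' j"
      unfolding c_def using cop_phat[OF j1] by (simp add: coprime_dvd_mult_left_iff)
    then show ?thesis
      using arithA[of "p j" "l j" "l' j" "\<epsilon> j" "\<epsilon>' j"] ppos podd lf lf' eE j j1 by auto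
  qed
  have one: "1 \<in> {1..r}" using r3 by auto
  have low: "l 1 = l' 1"
  proof -
    have "2 * p 1 dvd 2 * P" using p_dvd_P[OF one] by simp
    then have "2 * p 1 dvd (\<Sum>j\<in>{1..r}. c j)" using sc dvd_trans by blast
    then have "2 * p 1 dvd c 1"
    proof (rule sum_dvd_single[rotated 2])
      fix i assume i: "i \<in> {1..r}" "i \<noteq> 1"
      then have i2: "i \<in> {2..r}" by auto
      have "p 1 dvd phat r p i" using p_dvd_phat one i by auto
      moreover have "\<epsilon> i \<in> {-1,1}" "\<epsilon>' i \<in> {-1,1}" using eE i by auto
      then have "2 dvd \<epsilon> i - \<epsilon>' i" by auto
      ultimately have "2 * p 1 dvd (\<epsilon> i - \<epsilon>' i) * phat r p i" by (metis mult_dvd_mono)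
      then have "2 * p 1 dvd (\<epsilon> i - \<epsilon>' i) * phat r p i * l' i" by (rule dvd_mult2)
      moreover have "c i = (\<epsilon> i - \<epsilon>' i) * phat r p i * l' i"
        unfolding c_def using high[OF i2] by (simp add: algebra_simps)
      ultimately show "2 * p 1 dvd c i" by simp
    qed (use one in auto)
    moreover have "coprime (2 * p 1) (phat r p 1)" using phat1_odd cop_phat[OF one] by simp
    ultimately have "2 * p 1 dvd \<epsilon> 1 * l 1 - \<epsilon>' 1 * l' 1"
      unfolding c_def by (simp add: coprime_dvd_mult_left_iff)
    then show ?thesis
      using arithB[of "p 1" "l 1" "l' 1" "\<epsilon> 1" "\<epsilon>' 1"] ppos lf lf' eE one by auto
  qed
  have "\<forall>j\<in>{1..r}. l j = l' j"
  proof
    fix j assume "j \<in> {1..r}"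
    then show "l j = l' j" using low high by (cases "j = 1") auto
  qed
  then show ?thesis by (intro extensionalityI[OF lf(1) lf'(1)]) auto
qed

lemma exist_L:
  assumes h: "h \<in> frakH r p"
  shows "\<exists>l. l \<in> frakL r p \<and> hsim r p h l"
proof -
  have hE: "h \<in> extensional {1..r}" "\<forall>j\<in>{1..r}. 0 \<le> h j \<and> h j \<le> p j"
    "card {j\<in>{1..r}. \<not> p j dvd h j} \<ge> 3"
    using h unfolding frakH_def by auto
  define Od where "Od = {j\<in>{2..r}. odd (h j)}"
  define J where "J = (if even (card Od) then Od else insert 1 Od)"
  define l where "l = (\<lambda>j. if j \<in> {1..r} then (if j \<in> J then p j - h j else h j) else undefined)"
  have fO: "finite Od" "1 \<notin> Od" "Od \<subseteq> {2..r}" unfolding Od_def by auto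
  have J1: "J \<subseteq> {1..r}" unfolding J_def using fO(3) r3 by auto
  have J2: "even (card J)" unfolding J_def using fO by auto
  have JO: "j \<in> J \<longleftrightarrow> j \<in> Od" if "j \<in> {2..r}" for j
    unfolding J_def using that by auto
  have sim: "hsim r p h l"
    unfolding hsim_def using J1 J2 by (intro exI[of _ J]) (auto simp: l_def)
  have dv: "p j dvd l j \<longleftrightarrow> p j dvd h j" if "j \<in> {1..r}" for j
    using that by (auto simp: l_def dvd_diff_right_iff)
  have "{j\<in>{1..r}. \<not> p j dvd l j} = {j\<in>{1..r}. \<not> p j dvd h j}" using dv by blast
  then have lH: "l \<in> frakH r p"
    unfolding frakH_def using hE by (auto simp: l_def extensional_def)
  have "even (l j)" if j: "j \<in> {2..r}" for j
  proof (cases "j \<in> Od")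
    case True
    then have "odd (h j)" "odd (p j)" using podd j unfolding Od_def by auto
    then show ?thesis using JO[OF j] True j by (auto simp: l_def)
  next
    case False
    then show ?thesis using JO[OF j] j unfolding Od_def by (auto simp: l_def)
  qed
  then have "l \<in> frakL r p" using lH unfolding frakL_def by auto
  then show ?thesis using sim by blast
qed

lemma uniq_L:
  assumes l: "l \<in> frakL r p" and l': "l' \<in> frakL r p"
    and s1: "hsim r p h l" and s2: "hsim r p h l'"
  shows "l = l'"
proof -
  obtain J1 where J1: "J1 \<subseteq> {1..r}" "even (card J1)" "\<forall>j\<in>J1. h j = p j - l j" "\<forall>j\<in>{1..r} - J1. h j = l j"
    using s1 unfolding hsim_def by blast
  obtain J2 where J2: "J2 \<subseteq> {1..r}" "even (card J2)" "\<forall>j\<in>J2. h j = p j - l' j" "\<forall>j\<in>{1..r} - J2. h j = l' j"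
    using s2 unfolding hsim_def by blast
  note lf = L_facts[OF l] and lf' = L_facts[OF l']
  have v1: "l j = (if j \<in> J1 then p j - h j else h j)" if j: "j \<in> {1..r}" for j
  proof (cases "j \<in> J1")
    case True then show ?thesis using J1(3) by simp
  next
    case False then show ?thesis using J1(4) j by simp
  qed
  have v2: "l' j = (if j \<in> J2 then p j - h j else h j)" if j: "j \<in> {1..r}" for j
  proof (cases "j \<in> J2")
    case True then show ?thesis using J2(3) by simp
  next
    case False then show ?thesis using J2(4) j by simp
  qed
  have same: "j \<in> J1 \<longleftrightarrow> j \<in> J2" if j: "j \<in> {2..r}" for j
  proof -
    have j1: "j \<in> {1..r}" using j by auto
    have ev: "even (l j)" "even (l' j)" "odd (p j)" using lf lf' podd j by auto
    show ?thesis
    proof (rule ccontr)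
      assume "\<not> (j \<in> J1 \<longleftrightarrow> j \<in> J2)"
      then have "l j + l' j = p j" using v1[OF j1] v2[OF j1] by auto
      moreover have "even (l j + l' j)" using ev by simp
      ultimately show False using ev by simp
    qed
  qed
  have fin: "finite J1" "finite J2" using J1(1) J2(1) finite_subset by auto
  have d: "J1 - {1} = J2 - {1}"
  proof (rule set_eqI)
    fix x
    show "x \<in> J1 - {1} \<longleftrightarrow> x \<in> J2 - {1}"
    proof (cases "x \<in> {2..r}")
      case True then show ?thesis using same[OF True] by simp
    next
      case False
      then have "x \<notin> J1 - {1}" "x \<notin> J2 - {1}" using J1(1) J2(1) by auto
      then show ?thesis by blast
    qed
  qed
  have s1: "1 \<in> J1 \<longleftrightarrow> 1 \<in> J2"
  proof (rule ccontr)
    assume a: "\<not> (1 \<in> J1 \<longleftrightarrow> 1 \<in> J2)"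
    have c1: "card J1 = card (J1 - {1}) + (if 1 \<in> J1 then 1 else 0)"
    proof (cases "1 \<in> J1")
      case True then show ?thesis using card.remove[OF fin(1) True] by simp
    next
      case False then show ?thesis by simp
    qed
    have c2: "card J2 = card (J2 - {1}) + (if 1 \<in> J2 then 1 else 0)"
    proof (cases "1 \<in> J2")
      case True then show ?thesis using card.remove[OF fin(2) True] by simp
    next
      case False then show ?thesis by simp
    qed
    show False
    proof (cases "1 \<in> J1")
      case True
      then have "1 \<notin> J2" using a by simp
      then have "card J1 = card J2 + 1" using c1 c2 d True by simp
      then show False using J1(2) J2(2) by simp
    next
      case False
      then have "1 \<in> J2" using a by simp
      then have "card J2 = card J1 + 1" using c1 c2 d False by simp
      then show False using J1(2) J2(2) by simp
    qed
  qed
  have "\<forall>j\<in>{1..r}. l j = l' j"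
  proof
    fix j assume j: "j \<in> {1..r}"
    show "l j = l' j"
    proof (cases "j = 1")
      case True then show ?thesis using v1[OF j] v2[OF j] s1 by simp
    next
      case False then have "j \<in> {2..r}" using j by auto
      then show ?thesis using v1[OF j] v2[OF j] same by simp
    qed
  qed
  then show ?thesis by (intro extensionalityI[OF lf(1) lf'(1)]) auto
qed

end

theorem lemmaB2:
  fixes r :: nat and p :: "nat \<Rightarrow> int"
  assumes r3: "r \<ge> 3"
    and ppos: "\<forall>j\<in>{1..r}. p j > 0"
    and pcop: "\<forall>i\<in>{1..r}. \<forall>j\<in>{1..r}. i \<noteq> j \<longrightarrow> coprime (p i) (p j)"
    and podd: "\<forall>j\<in>{2..r}. odd (p j)"
  shows "(frakL r p \<subseteq> frakH r p \<and>
          (\<forall>h\<in>frakH r p. \<exists>!l. l \<in> frakL r p \<and> hsim r p h l))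
       \<and> (\<forall>h\<in>frakH r p. \<forall>h'\<in>frakH r p. hsim r p h h' \<longrightarrow>
            Jset r p h = Jset r p h' \<and> frakS r p h = frakS r p h')
       \<and> (\<forall>l\<in>frakL r p. \<forall>l'\<in>frakL r p. l \<noteq> l' \<longrightarrow> frakS r p l \<inter> frakS r p l' = {})
       \<and> (\<forall>l\<in>frakL r p. \<exists>c. \<forall>m\<in>frakS r p l. m\<^sup>2 mod (4 * bigP r p) = c)"
proof -
  interpret lemB r p using assms by unfold_locales
  have A: "frakL r p \<subseteq> frakH r p" unfolding frakL_def by auto
  have B: "\<forall>h\<in>frakH r p. \<exists>!l. l \<in> frakL r p \<and> hsim r p h l"
  proof
    fix h assume "h \<in> frakH r p"
    then obtain l where l: "l \<in> frakL r p \<and> hsim r p h l" using exist_L by blast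
    show "\<exists>!l. l \<in> frakL r p \<and> hsim r p h l"
    proof (rule ex1I[of _ l])
      show "l \<in> frakL r p \<and> hsim r p h l" by (rule l)
      fix l' assume "l' \<in> frakL r p \<and> hsim r p h l'"
      then show "l' = l" using uniq_L l by metis
    qed
  qed
  have C: "\<forall>h\<in>frakH r p. \<forall>h'\<in>frakH r p. hsim r p h h' \<longrightarrow>
            Jset r p h = Jset r p h' \<and> frakS r p h = frakS r p h'"
  proof (intro ballI impI conjI)
    fix h h' assume s: "hsim r p h h'"
    show "Jset r p h = Jset r p h'" by (rule hsim_J[OF s])
    show "frakS r p h = frakS r p h'"
      by (rule equalityI[OF hsim_S_sub[OF s] hsim_S_sub[OF hsim_sym[OF s]]])
  qed
  have D: "\<forall>l\<in>frakL r p. \<forall>l'\<in>frakL r p. l \<noteq> l' \<longrightarrow> frakS r p l \<inter> frakS r p l' = {}"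
  proof (intro ballI impI)
    fix l l' assume "l \<in> frakL r p" "l' \<in> frakL r p" "l \<noteq> l'"
    then show "frakS r p l \<inter> frakS r p l' = {}" using L_disj by blast
  qed
  have E: "\<forall>l\<in>frakL r p. \<exists>c. \<forall>m\<in>frakS r p l. m\<^sup>2 mod (4 * bigP r p) = c"
  proof
    fix l assume "l \<in> frakL r p"
    show "\<exists>c. \<forall>m\<in>frakS r p l. m\<^sup>2 mod (4 * bigP r p) = c"
    proof (intro exI ballI)
      fix m assume "m \<in> frakS r p l"
      then obtain \<epsilon> k where e: "\<epsilon> \<in> signsE r" and mk: "m = calN r p l \<epsilon> + 2 * P * k"
        unfolding frakS_def by blast
      show "m\<^sup>2 mod (4 * bigP r p) = (calN r p l (\<lambda>j\<in>{1..r}. 1))\<^sup>2 mod (4 * P)"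
        unfolding mk sq_shift using sq_const[OF e] .
    qed
  qed
  show ?thesis using A B C D E by (intro conjI)
qed

end
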